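(* Let $\mathcal F\subset\mathcal F_X$ be a set of feasible environments. For each decision rule $p$ and each history $h$, $$\inf_{\mu\in\Delta(\mathcal F(h))}\frac{U_p(\mu,h)}{V(\mu,h)}=\inf_{F\in\mathcal F(h)}\frac{U_p(F,h)}{V(F,h)}.$$
   Context: Sequential search model. Fix a discount factor $\delta\in(0,1)$, a Borel set $X\subset\mathbb{R}_+$ with $0\in X$, and an outside option $x_0>0$. Let $\mathcal F_X$ be the set of Borel probability distributions on $X$ with finite mean ("environments"). A history is $h_t=(x_0,x_1,\dots,x_t)$, $t\ge0$, $x_i\in X$, with best-so-far alternative $y_t=\max\{x_0,\dots,x_t\}$. A decision rule $p$ assigns to each history $h$ a stopping probability $p(h)\in[0,1]$. Given an environment $F$ and a history $h_t$, future alternatives are i.i.d. with law $F$; at each round $s\ge t$ the individual stops with probability $p(h_s)$, and stopping at round $s$ yields $\delta^{s-t}y_s$ (never stopping yields $0$). $U_p(F,h)$ is the expected payoff and $V(F,h)=\sup_pU_p(F,h)$. A prior is a finitely supported probability distribution $\mu$ on $\mathcal F$; $\Delta(\mathcal F)$ is the set of priors, each $F\in\mathcal F$ identified with the point mass on it. An environment or prior is consistent with $h_t$ if the sequence $x_1,\dots,x_t$ occurs with positive probability under it; $\mathcal F(h)$ and $\Delta(\mathcal F(h))$ denote the sets of environments and priors consistent with $h$. For $\mu\in\Delta(\mathcal F(h))$, $U_p(\mu,h)=\sum_F\mu(F\mid h)U_p(F,h)$ where $\mu(\cdot\mid h)$ is the Bayesian posterior given $h$, and $V(\mu,h)=\sup_pU_p(\mu,h)$.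 *)

theory Defs
  imports "HOL-Probability.Probability"
begin

text \<open>Histories are represented by the list [x_1,...,x_t] of sampled alternatives;
  the outside option x_0 is a fixed parameter.\<close>

definition best :: "real \<Rightarrow> real list \<Rightarrow> real" where
  "best x0 xs = Max (insert x0 (set xs))"

definition environment :: "real set \<Rightarrow> real measure \<Rightarrow> bool" where
  "environment X F \<longleftrightarrow> prob_space F \<and> sets F = sets borel \<and> measure F X = 1
      \<and> integrable F (\<lambda>x. x)"

definition decision_rule :: "(real list \<Rightarrow> real) \<Rightarrow> bool" where
  "decision_rule p \<longleftrightarrow> (\<forall>h. 0 \<le> p h \<and> p h \<le> 1) \<and>
     (\<forall>h k. (\<lambda>\<omega>. p (h @ map \<omega> [0..<k])) \<in> borel_measurable (Pi\<^sub>M {..<k} (\<lambda>_. borel)))"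

text \<open>Expected payoff: stopping at round t+k (after k further i.i.d. draws) has probability
  prod_{j<k} (1 - p(h_{t+j})) * p(h_{t+k}) and yields delta^k y_{t+k}.\<close>
definition payoff :: "real \<Rightarrow> real \<Rightarrow> (real list \<Rightarrow> real) \<Rightarrow> real measure \<Rightarrow> real list \<Rightarrow> real" where
  "payoff \<delta> x0 p F h = enn2real (\<Sum>k. ennreal (\<delta> ^ k) *
     (\<integral>\<^sup>+ \<omega>. ennreal ((\<Prod>j<k. 1 - p (h @ map \<omega> [0..<j])) * p (h @ map \<omega> [0..<k])
                       * best x0 (h @ map \<omega> [0..<k])) \<partial>(Pi\<^sub>M {..<k} (\<lambda>_. F))))"

definition value_env :: "real \<Rightarrow> real \<Rightarrow> real measure \<Rightarrow> real list \<Rightarrow> real" where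
  "value_env \<delta> x0 F h = (SUP p\<in>Collect decision_rule. payoff \<delta> x0 p F h)"

definition likelihood :: "real measure \<Rightarrow> real list \<Rightarrow> real" where
  "likelihood F h = prod_list (map (\<lambda>x. measure F {x}) h)"

definition consistent_envs :: "real measure set \<Rightarrow> real list \<Rightarrow> real measure set" where
  "consistent_envs Fs h = {F \<in> Fs. likelihood F h > 0}"

definition priors_on :: "real measure set \<Rightarrow> real measure pmf set" where
  "priors_on S = {\<mu>. finite (set_pmf \<mu>) \<and> set_pmf \<mu> \<subseteq> S}"

definition posterior :: "real measure pmf \<Rightarrow> real list \<Rightarrow> real measure \<Rightarrow> real" where
  "posterior \<mu> h F = pmf \<mu> F * likelihood F h / (\<Sum>G\<in>set_pmf \<mu>. pmf \<mu> G * likelihood G h)"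

definition payoff_prior :: "real \<Rightarrow> real \<Rightarrow> (real list \<Rightarrow> real) \<Rightarrow> real measure pmf \<Rightarrow> real list \<Rightarrow> real" where
  "payoff_prior \<delta> x0 p \<mu> h = (\<Sum>F\<in>set_pmf \<mu>. posterior \<mu> h F * payoff \<delta> x0 p F h)"

definition value_prior :: "real \<Rightarrow> real \<Rightarrow> real measure pmf \<Rightarrow> real list \<Rightarrow> real" where
  "value_prior \<delta> x0 \<mu> h = (SUP p\<in>Collect decision_rule. payoff_prior \<delta> x0 p \<mu> h)"

end

theory Submission
  imports Defs
begin

lemma summable_n_pow:
  assumes "0 < (d::real)" "d < 1"
  shows "summable (\<lambda>n. real n * d^n)"
proof -
  have "summable (\<lambda>n. diffs (\<lambda>_. 1::real) n * d ^ n)"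
    by (rule termdiff_converges[of _ 1]) (use assms in auto)
  then have s: "summable (\<lambda>n. real (Suc n) * d ^ n)" by (simp add: diffs_def)
  show ?thesis
    by (rule summable_comparison_test'[OF s, of 0]) (use assms in auto)
qed

lemma best_ge: "x0 \<le> best x0 xs"
  unfolding best_def by (rule Max_ge) auto

lemma best_le:
  assumes x0: "0 \<le> x0"
  shows "best x0 (h @ map \<omega> [0..<k]) \<le> x0 + sum_list (map abs h) + (\<Sum>j<k. \<bar>\<omega> j\<bar>)"
proof -
  have s0: "0 \<le> sum_list (map abs h)" by (induct h) auto
  have s1: "0 \<le> (\<Sum>j<k. \<bar>\<omega> j\<bar>)" by (auto intro: sum_nonneg)
  have nn: "\<And>h. 0 \<le> sum_list (map abs (h::real list))" by (rule sum_list_nonneg) auto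
  have a: "x \<le> sum_list (map abs h)" if "x \<in> set h" for x
    using that proof (induct h)
    case (Cons a h) then show ?case using nn[of h] by auto
  qed auto
  have b: "\<bar>\<omega> j\<bar> \<le> (\<Sum>j<k. \<bar>\<omega> j\<bar>)" if "j < k" for j
    using that by (intro member_le_sum) auto
  have "\<forall>y\<in>insert x0 (set (h @ map \<omega> [0..<k])). y \<le> x0 + sum_list (map abs h) + (\<Sum>j<k. \<bar>\<omega> j\<bar>)"
  proof
    fix y assume "y \<in> insert x0 (set (h @ map \<omega> [0..<k]))"
    then consider "y = x0" | "y \<in> set h" | j where "j < k" "y = \<omega> j" by auto
    then show "y \<le> x0 + sum_list (map abs h) + (\<Sum>j<k. \<bar>\<omega> j\<bar>)"
    proof cases
      case 2 then show ?thesis using a[of y] s1 x0 by linarith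
    next
      case (3 j) then show ?thesis using b[of j] s0 x0 by (smt (verit))
    qed (use s0 s1 in linarith)
  qed
  then show ?thesis unfolding best_def by (subst Max_le_iff) auto
qed

lemma comp_nn:
  assumes F: "prob_space F" "sets F = sets borel" and j: "j < k"
  shows "(\<integral>\<^sup>+\<omega>. ennreal \<bar>\<omega> j\<bar> \<partial>(Pi\<^sub>M {..<k} (\<lambda>_. F))) = (\<integral>\<^sup>+x. ennreal \<bar>x\<bar> \<partial>F)"
proof -
  have m: "(\<lambda>\<omega>. \<omega> j) \<in> measurable (Pi\<^sub>M {..<k} (\<lambda>_. F)) F"
    using j by (intro measurable_component_singleton) auto
  have g0: "(\<lambda>x. ennreal \<bar>x\<bar>) \<in> borel_measurable F"
    using F(2) by (simp add: measurable_cong_sets[OF F(2) refl])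
  have g: "(\<lambda>x. ennreal \<bar>x\<bar>) \<in> borel_measurable (distr (Pi\<^sub>M {..<k} (\<lambda>_. F)) F (\<lambda>\<omega>. \<omega> j))"
    by (subst measurable_cong_sets[OF sets_distr refl]) (rule g0)
  have "(\<integral>\<^sup>+\<omega>. ennreal \<bar>\<omega> j\<bar> \<partial>(Pi\<^sub>M {..<k} (\<lambda>_. F))) =
        (\<integral>\<^sup>+x. ennreal \<bar>x\<bar> \<partial>(distr (Pi\<^sub>M {..<k} (\<lambda>_. F)) F (\<lambda>\<omega>. \<omega> j)))"
    by (rule nn_integral_distr[OF m g, symmetric])
  also have "distr (Pi\<^sub>M {..<k} (\<lambda>_. F)) F (\<lambda>\<omega>. \<omega> j) = F"
    using F j by (intro distr_PiM_component) auto
  finally show ?thesis .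
qed

lemma int_bound:
  assumes F: "prob_space F" "sets F = sets borel" "integrable F (\<lambda>x. x)" and x0: "0 \<le> x0"
  shows "(\<integral>\<^sup>+\<omega>. ennreal (best x0 (h @ map \<omega> [0..<k])) \<partial>(Pi\<^sub>M {..<k} (\<lambda>_. F)))
     \<le> ennreal (x0 + sum_list (map abs h) + real k * (\<integral>x. \<bar>x\<bar> \<partial>F))"
proof -
  let ?P = "Pi\<^sub>M {..<k} (\<lambda>_. F)"
  define c where "c = x0 + sum_list (map abs h)"
  have c0: "0 \<le> c" proof -
    have "0 \<le> sum_list (map abs h)" by (rule sum_list_nonneg) auto
    then show ?thesis unfolding c_def using x0 by linarith
  qed
  have PP: "prob_space ?P" by (rule prob_space_PiM) (use F in auto)
  have mj: "(\<lambda>\<omega>. ennreal \<bar>\<omega> j\<bar>) \<in> borel_measurable ?P" if "j < k" for j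
  proof -
    have m: "(\<lambda>\<omega>. \<omega> j) \<in> measurable ?P F"
      using that by (intro measurable_component_singleton) auto
    have g0: "(\<lambda>x. ennreal \<bar>x\<bar>) \<in> borel_measurable F"
      using F(2) by (simp add: measurable_cong_sets[OF F(2) refl])
    show ?thesis using measurable_compose[OF m g0] by simp
  qed
  have "(\<integral>\<^sup>+\<omega>. ennreal (best x0 (h @ map \<omega> [0..<k])) \<partial>?P)
     \<le> (\<integral>\<^sup>+\<omega>. ennreal c + (\<Sum>j<k. ennreal \<bar>\<omega> j\<bar>) \<partial>?P)"
  proof (rule nn_integral_mono)
    fix \<omega>
    have "ennreal (best x0 (h @ map \<omega> [0..<k])) \<le> ennreal (c + (\<Sum>j<k. \<bar>\<omega> j\<bar>))"
      using best_le[OF x0, of h \<omega> k] unfolding c_def by (intro ennreal_leI) simp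
    also have "\<dots> = ennreal c + (\<Sum>j<k. ennreal \<bar>\<omega> j\<bar>)"
      using c0 by (simp add: sum_nonneg ennreal_plus[symmetric] del: ennreal_plus)
    finally show "ennreal (best x0 (h @ map \<omega> [0..<k])) \<le> ennreal c + (\<Sum>j<k. ennreal \<bar>\<omega> j\<bar>)" .
  qed
  also have "\<dots> = ennreal c + (\<Sum>j<k. \<integral>\<^sup>+\<omega>. ennreal \<bar>\<omega> j\<bar> \<partial>?P)"
  proof -
    have s: "(\<integral>\<^sup>+\<omega>. (\<Sum>j<k. ennreal \<bar>\<omega> j\<bar>) \<partial>?P) = (\<Sum>j<k. \<integral>\<^sup>+\<omega>. ennreal \<bar>\<omega> j\<bar> \<partial>?P)"
      by (rule nn_integral_sum) (use mj in blast)
    have ms: "(\<lambda>\<omega>. \<Sum>j<k. ennreal \<bar>\<omega> j\<bar>) \<in> borel_measurable ?P"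
      by (rule borel_measurable_sum) (use mj in blast)
    show ?thesis
      by (subst nn_integral_add) (use ms s PP in \<open>auto simp del: sum_ennreal simp: prob_space.emeasure_space_1\<close>)
  qed
  also have "\<dots> = ennreal c + (\<Sum>j<k. \<integral>\<^sup>+x. ennreal \<bar>x\<bar> \<partial>F)"
    using comp_nn[OF F(1,2), of _ k] by (intro arg_cong2[where f="(+)"] refl sum.cong) auto
  also have "(\<integral>\<^sup>+x. ennreal \<bar>x\<bar> \<partial>F) = ennreal (\<integral>x. \<bar>x\<bar> \<partial>F)"
    using F by (intro nn_integral_eq_integral) auto
  also have "ennreal c + (\<Sum>j<k. ennreal (\<integral>x. \<bar>x\<bar> \<partial>F)) = ennreal (c + real k * (\<integral>x. \<bar>x\<bar> \<partial>F))"
  proof -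
    have a0: "0 \<le> (\<integral>x. \<bar>x\<bar> \<partial>F)" by (rule integral_nonneg_AE) simp
    show ?thesis
      using c0 a0 by (simp add: ennreal_plus ennreal_mult ennreal_of_nat_eq_real_of_nat)
  qed
  finally show ?thesis unfolding c_def .
qed

definition bnd :: "real \<Rightarrow> real \<Rightarrow> real measure \<Rightarrow> real list \<Rightarrow> ennreal" where
  "bnd \<delta> x0 F h = (\<Sum>k. ennreal (\<delta> ^ k) *
     (\<integral>\<^sup>+ \<omega>. ennreal (best x0 (h @ map \<omega> [0..<k])) \<partial>(Pi\<^sub>M {..<k} (\<lambda>_. F))))"

lemma bnd_fin:
  assumes d: "0 < \<delta>" "\<delta> < 1"
    and F: "prob_space F" "sets F = sets borel" "integrable F (\<lambda>x. x)" and x0: "0 \<le> x0"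
  shows "bnd \<delta> x0 F h < \<top>"
proof -
  define C where "C = x0 + sum_list (map abs h)"
  define a where "a = (\<integral>x. \<bar>x\<bar> \<partial>F)"
  have C0: "0 \<le> C"
  proof -
    have "0 \<le> sum_list (map abs h)" by (rule sum_list_nonneg) auto
    then show ?thesis unfolding C_def using x0 by linarith
  qed
  have a0: "0 \<le> a" unfolding a_def by (rule integral_nonneg_AE) simp
  have sm: "summable (\<lambda>k. \<delta> ^ k * (C + real k * a))"
  proof -
    have "summable (\<lambda>k. C * \<delta> ^ k + a * (real k * \<delta> ^ k))"
      using d by (intro summable_add summable_mult summable_geometric summable_n_pow) auto
    then show ?thesis by (simp add: algebra_simps)
  qed
  have "bnd \<delta> x0 F h \<le> (\<Sum>k. ennreal (\<delta> ^ k * (C + real k * a)))"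
    unfolding bnd_def
  proof (intro suminf_le summableI)
    fix k
    have "ennreal (\<delta> ^ k) * (\<integral>\<^sup>+ \<omega>. ennreal (best x0 (h @ map \<omega> [0..<k])) \<partial>(Pi\<^sub>M {..<k} (\<lambda>_. F)))
       \<le> ennreal (\<delta> ^ k) * ennreal (C + real k * a)"
      unfolding C_def a_def by (intro mult_left_mono int_bound F x0) auto
    also have "\<dots> = ennreal (\<delta> ^ k * (C + real k * a))"
      using d C0 a0 by (subst ennreal_mult) auto
    finally show "ennreal (\<delta> ^ k) * (\<integral>\<^sup>+ \<omega>. ennreal (best x0 (h @ map \<omega> [0..<k])) \<partial>(Pi\<^sub>M {..<k} (\<lambda>_. F)))
       \<le> ennreal (\<delta> ^ k * (C + real k * a))" .
  qed
  also have "\<dots> = ennreal (\<Sum>k. \<delta> ^ k * (C + real k * a))"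
    using d C0 a0 sm by (intro suminf_ennreal2) auto
  finally show ?thesis using le_less_trans by fastforce
qed

lemma payoff_le:
  assumes p: "decision_rule p" and x0: "0 \<le> x0" and d: "0 < \<delta>"
    and fin: "bnd \<delta> x0 F h < \<top>"
  shows "payoff \<delta> x0 p F h \<le> enn2real (bnd \<delta> x0 F h)"
  unfolding payoff_def
proof (rule enn2real_mono[OF _ fin])
  show "(\<Sum>k. ennreal (\<delta> ^ k) *
     (\<integral>\<^sup>+ \<omega>. ennreal ((\<Prod>j<k. 1 - p (h @ map \<omega> [0..<j])) * p (h @ map \<omega> [0..<k])
                       * best x0 (h @ map \<omega> [0..<k])) \<partial>(Pi\<^sub>M {..<k} (\<lambda>_. F)))) \<le> bnd \<delta> x0 F h"
    unfolding bnd_def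
  proof (intro suminf_le summableI mult_left_mono nn_integral_mono ennreal_leI)
    fix k \<omega>
    have p01: "0 \<le> p x \<and> p x \<le> 1" for x using p unfolding decision_rule_def by auto
    have P0: "0 \<le> (\<Prod>j<k. 1 - p (h @ map \<omega> [0..<j]))" using p01 by (intro prod_nonneg) (auto simp: algebra_simps)
    have P1: "(\<Prod>j<k. 1 - p (h @ map \<omega> [0..<j])) \<le> 1" using p01 by (intro prod_le_1) (auto simp: algebra_simps)
    have b0: "0 \<le> best x0 (h @ map \<omega> [0..<k])" using best_ge[of x0] x0 by (meson order_trans)
    have "(\<Prod>j<k. 1 - p (h @ map \<omega> [0..<j])) * p (h @ map \<omega> [0..<k]) \<le> 1"
      using P0 P1 p01 by (meson mult_le_one)
    moreover have "0 \<le> (\<Prod>j<k. 1 - p (h @ map \<omega> [0..<j])) * p (h @ map \<omega> [0..<k])"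
      using P0 p01 by simp
    ultimately show "(\<Prod>j<k. 1 - p (h @ map \<omega> [0..<j])) * p (h @ map \<omega> [0..<k]) * best x0 (h @ map \<omega> [0..<k])
         \<le> best x0 (h @ map \<omega> [0..<k])"
      using b0 by (simp add: mult_left_le_one_le)
  qed auto
qed

lemma payoff_nonneg: "0 \<le> payoff \<delta> x0 p F h"
  unfolding payoff_def by simp

lemma decision_rule_one: "decision_rule (\<lambda>_. 1)"
  unfolding decision_rule_def by auto

lemma payoff_one: assumes x0: "0 \<le> x0" shows "payoff \<delta> x0 (\<lambda>_. 1) F h = best x0 h"
proof -
  have "(\<Sum>k. ennreal (\<delta> ^ k) *
     (\<integral>\<^sup>+ \<omega>. ennreal ((\<Prod>j<k. 1 - (1::real)) * 1 * best x0 (h @ map \<omega> [0..<k])) \<partial>(Pi\<^sub>M {..<k} (\<lambda>_. F))))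
    = (\<Sum>k\<in>{0::nat}. ennreal (\<delta> ^ k) *
     (\<integral>\<^sup>+ \<omega>. ennreal ((\<Prod>j<k. 1 - (1::real)) * 1 * best x0 (h @ map \<omega> [0..<k])) \<partial>(Pi\<^sub>M {..<k} (\<lambda>_. F))))"
    by (rule suminf_finite) (auto simp: power_0_left)
  also have "\<dots> = ennreal (best x0 h)"
    by (simp add: PiM_empty nn_integral_count_space_finite)
  finally show ?thesis unfolding payoff_def
    using best_ge[of x0 h] x0 by simp
qed

theorem proposition1:
  fixes \<delta> x0 :: real and X :: "real set" and Fs :: "real measure set"
    and p :: "real list \<Rightarrow> real" and h :: "real list"
  assumes "0 < \<delta>" "\<delta> < 1"
    and "X \<in> sets borel" "X \<subseteq> {0..}" "0 \<in> X" "x0 > 0"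
    and "\<forall>F\<in>Fs. environment X F"
    and "decision_rule p"
    and "set h \<subseteq> X"
  shows "(INF \<mu>\<in>priors_on (consistent_envs Fs h). payoff_prior \<delta> x0 p \<mu> h / value_prior \<delta> x0 \<mu> h)
       = (INF F\<in>consistent_envs Fs h. payoff \<delta> x0 p F h / value_env \<delta> x0 F h)"
proof -
  note d = assms(1,2)
  have x0: "0 \<le> x0" using assms(6) by simp
  define S where "S = consistent_envs Fs h"
  define D where "D = Collect decision_rule"
  have D1: "(\<lambda>_. 1) \<in> D" unfolding D_def using decision_rule_one by simp
  have pD: "p \<in> D" unfolding D_def using assms(8) by simp
  have envS: "prob_space F" "sets F = sets borel" "integrable F (\<lambda>x. x)" if "F \<in> S" for F
    using that assms(7) unfolding S_def consistent_envs_def environment_def by auto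
  have LS: "likelihood F h > 0" if "F \<in> S" for F
    using that unfolding S_def consistent_envs_def by auto
  have bpos: "best x0 h > 0" using best_ge[of x0 h] assms(6) by linarith
  have bddF: "bdd_above ((\<lambda>q. payoff \<delta> x0 q F h) ` D)" if "F \<in> S" for F
    using payoff_le[OF _ x0 d(1) bnd_fin[OF d envS[OF that] x0]] unfolding D_def
    by (intro bdd_aboveI2) auto
  have VF: "payoff \<delta> x0 q F h \<le> value_env \<delta> x0 F h" if "F \<in> S" "q \<in> D" for F q
    unfolding value_env_def D_def[symmetric] by (rule cSUP_upper[OF that(2) bddF[OF that(1)]])
  have VFpos: "value_env \<delta> x0 F h > 0" if "F \<in> S" for F
    using VF[OF that D1] payoff_one[OF x0] bpos by simp
  define r where "r F = payoff \<delta> x0 p F h / value_env \<delta> x0 F h" for F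
  have r0: "0 \<le> r F" if "F \<in> S" for F
    unfolding r_def using VFpos[OF that] payoff_nonneg by simp
  have bddr: "bdd_below (r ` S)" using r0 by (intro bdd_belowI2) auto
  define m where "m = (INF F\<in>S. r F)"
  have ret: "return_pmf F \<in> priors_on S" if "F \<in> S" for F
    unfolding priors_on_def using that by simp
  have ret_pp: "payoff_prior \<delta> x0 q (return_pmf F) h = payoff \<delta> x0 q F h" if "F \<in> S" for F q
    unfolding payoff_prior_def posterior_def using LS[OF that] by simp
  have ret_vp: "value_prior \<delta> x0 (return_pmf F) h = value_env \<delta> x0 F h" if "F \<in> S" for F
    unfolding value_prior_def value_env_def using ret_pp[OF that] by simp
  have ret_ratio: "payoff_prior \<delta> x0 p (return_pmf F) h / value_prior \<delta> x0 (return_pmf F) h = r F"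
    if "F \<in> S" for F
    unfolding r_def using ret_pp[OF that] ret_vp[OF that] by simp
  have prior_facts: "0 \<le> payoff_prior \<delta> x0 p \<mu> h / value_prior \<delta> x0 \<mu> h \<and>
      (S \<noteq> {} \<longrightarrow> m \<le> payoff_prior \<delta> x0 p \<mu> h / value_prior \<delta> x0 \<mu> h)"
    if \<mu>: "\<mu> \<in> priors_on S" for \<mu>
  proof -
    define A where "A = set_pmf \<mu>"
    have Afin: "finite A" and AS: "A \<subseteq> S" using \<mu> unfolding priors_on_def A_def by auto
    have Ane: "A \<noteq> {}" unfolding A_def by (rule set_pmf_not_empty)
    define Z where "Z = (\<Sum>G\<in>A. pmf \<mu> G * likelihood G h)"
    have termpos: "pmf \<mu> G * likelihood G h > 0" if "G \<in> A" for G
      using that AS LS unfolding A_def by (auto simp: pmf_positive)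
    have Zpos: "Z > 0" unfolding Z_def using Afin Ane termpos by (intro sum_pos) auto
    define w where "w G = posterior \<mu> h G" for G
    have w_eq: "w G = pmf \<mu> G * likelihood G h / Z" for G
      unfolding w_def posterior_def Z_def A_def by simp
    have w0: "0 \<le> w G" if "G \<in> A" for G using termpos[OF that] Zpos w_eq[of G] by simp
    have wsum: "(\<Sum>G\<in>A. w G) = 1"
      using Zpos unfolding w_eq by (simp add: sum_divide_distrib[symmetric] Z_def)
    have pp: "payoff_prior \<delta> x0 q \<mu> h = (\<Sum>G\<in>A. w G * payoff \<delta> x0 q G h)" for q
      unfolding payoff_prior_def A_def w_def by simp
    have bddP: "bdd_above ((\<lambda>q. payoff_prior \<delta> x0 q \<mu> h) ` D)"
    proof (rule bdd_aboveI2)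
      fix q assume "q \<in> D"
      then show "payoff_prior \<delta> x0 q \<mu> h \<le> (\<Sum>G\<in>A. w G * value_env \<delta> x0 G h)"
        unfolding pp using w0 AS VF by (intro sum_mono mult_left_mono) auto
    qed
    have VP_le: "value_prior \<delta> x0 \<mu> h \<le> (\<Sum>G\<in>A. w G * value_env \<delta> x0 G h)"
      unfolding value_prior_def D_def[symmetric]
    proof (rule cSUP_least)
      show "D \<noteq> {}" using D1 by auto
      fix q assume "q \<in> D"
      then show "payoff_prior \<delta> x0 q \<mu> h \<le> (\<Sum>G\<in>A. w G * value_env \<delta> x0 G h)"
        unfolding pp using w0 AS VF by (intro sum_mono mult_left_mono) auto
    qed
    have VP_ge: "best x0 h \<le> value_prior \<delta> x0 \<mu> h"
    proof -
      have "payoff_prior \<delta> x0 (\<lambda>_. 1) \<mu> h = best x0 h"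
        unfolding pp payoff_one[OF x0] by (simp add: sum_distrib_right[symmetric] wsum)
      moreover have "payoff_prior \<delta> x0 (\<lambda>_. 1) \<mu> h \<le> value_prior \<delta> x0 \<mu> h"
        unfolding value_prior_def D_def[symmetric] by (rule cSUP_upper[OF D1 bddP])
      ultimately show ?thesis by simp
    qed
    have VPpos: "value_prior \<delta> x0 \<mu> h > 0" using VP_ge bpos by linarith
    have PP0: "0 \<le> payoff_prior \<delta> x0 p \<mu> h"
      unfolding pp using w0 payoff_nonneg by (intro sum_nonneg mult_nonneg_nonneg) auto
    have part2: "m \<le> payoff_prior \<delta> x0 p \<mu> h / value_prior \<delta> x0 \<mu> h" if Sne: "S \<noteq> {}"
    proof -
      have m0: "0 \<le> m" unfolding m_def using Sne r0 by (intro cINF_greatest) auto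
      have mr: "m \<le> r G" if "G \<in> S" for G unfolding m_def by (rule cINF_lower[OF bddr that])
      have UG: "m * value_env \<delta> x0 G h \<le> payoff \<delta> x0 p G h" if "G \<in> S" for G
      proof -
        have "m * value_env \<delta> x0 G h \<le> r G * value_env \<delta> x0 G h"
          using mr[OF that] VFpos[OF that] by (intro mult_right_mono) auto
        also have "\<dots> = payoff \<delta> x0 p G h" unfolding r_def using VFpos[OF that] by simp
        finally show ?thesis .
      qed
      have "m * value_prior \<delta> x0 \<mu> h \<le> m * (\<Sum>G\<in>A. w G * value_env \<delta> x0 G h)"
        using m0 VP_le by (rule mult_left_mono[rotated])
      also have "\<dots> = (\<Sum>G\<in>A. w G * (m * value_env \<delta> x0 G h))"
        by (simp add: sum_distrib_left algebra_simps)
      also have "\<dots> \<le> (\<Sum>G\<in>A. w G * payoff \<delta> x0 p G h)"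
        using w0 AS UG by (intro sum_mono mult_left_mono) auto
      also have "\<dots> = payoff_prior \<delta> x0 p \<mu> h" unfolding pp ..
      finally show ?thesis using VPpos by (simp add: le_divide_eq)
    qed
    show ?thesis using PP0 VPpos part2 by simp
  qed
  show ?thesis
    unfolding S_def[symmetric] r_def[symmetric]
  proof (cases "S = {}")
    case True
    have "priors_on S = {}" unfolding True priors_on_def using set_pmf_not_empty by auto
    then show "(INF \<mu>\<in>priors_on S. payoff_prior \<delta> x0 p \<mu> h / value_prior \<delta> x0 \<mu> h) = (INF F\<in>S. r F)"
      using True by simp
  next
    case False
    have bddl: "bdd_below ((\<lambda>\<mu>. payoff_prior \<delta> x0 p \<mu> h / value_prior \<delta> x0 \<mu> h) ` priors_on S)"
      using prior_facts by (intro bdd_belowI2) auto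
    have pne: "priors_on S \<noteq> {}" using False ret by auto
    show "(INF \<mu>\<in>priors_on S. payoff_prior \<delta> x0 p \<mu> h / value_prior \<delta> x0 \<mu> h) = (INF F\<in>S. r F)"
    proof (rule antisym)
      show "(INF \<mu>\<in>priors_on S. payoff_prior \<delta> x0 p \<mu> h / value_prior \<delta> x0 \<mu> h) \<le> (INF F\<in>S. r F)"
      proof (rule cINF_greatest[OF False])
        fix F assume F: "F \<in> S"
        show "(INF \<mu>\<in>priors_on S. payoff_prior \<delta> x0 p \<mu> h / value_prior \<delta> x0 \<mu> h) \<le> r F"
          using cINF_lower[OF bddl ret[OF F]] ret_ratio[OF F] by simp
      qed
      show "(INF F\<in>S. r F) \<le> (INF \<mu>\<in>priors_on S. payoff_prior \<delta> x0 p \<mu> h / value_prior \<delta> x0 \<mu> h)"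
        using prior_facts False unfolding m_def by (intro cINF_greatest[OF pne]) auto
    qed
  qed
qed

end
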